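(* Let $m\ge d>0$, let $A(x)=\sum_{i=0}^d a_ix^i=a_d\prod_{i=1}^d(x-\alpha_i)\in\mathbb{Z}[x]$ be primitive of degree $d$ with $a_0\ne0$, and let $\theta_1,\dots,\theta_m\in\mathbb{R}$ satisfy $\sum_{i=0}^d a_i\theta_{j+i}=0$ for $1\le j\le m-d$, with $\theta_1,\dots,\theta_d$ linearly independent over $\mathbb{Q}$. Then $S_{\theta,m}=\{\pi_m(t\theta_1,\dots,t\theta_m):t\in\mathbb{R}\}$ is $\epsilon$-dense for every \[ \epsilon\ \ge\ \left(|a_d|\prod_{i=1}^d\max\{|\alpha_i|,\,1-|\alpha_i|\}\right)^{-1}. \]
   Context: $\mathbb{T}^m=\mathbb{R}^m/\mathbb{Z}^m$, $\pi_m:\mathbb{R}^m\to\mathbb{T}^m$ is the canonical projection. For $\epsilon>0$ let $C_\epsilon=\pi_m([-\epsilon/2,\epsilon/2]^m)$. A set $S\subseteq\mathbb{T}^m$ is $\epsilon$-dense if $S+C_{\bar\epsilon}=\mathbb{T}^m$ for every $\bar\epsilon>\epsilon$. *)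

theory Defs
  imports "HOL-Analysis.Analysis" "HOL-Computational_Algebra.Polynomial"
begin

text \<open>Points of R^m are represented as functions nat => real, of which only the
coordinates 1..m matter.\<close>

definition torus_eq :: "nat \<Rightarrow> (nat \<Rightarrow> real) \<Rightarrow> (nat \<Rightarrow> real) \<Rightarrow> bool" where
  "torus_eq m x y \<longleftrightarrow> (\<forall>j\<in>{1..m}. x j - y j \<in> \<int>)"

definition cube :: "nat \<Rightarrow> real \<Rightarrow> (nat \<Rightarrow> real) set" where
  "cube m eps = {c. \<forall>j\<in>{1..m}. \<bar>c j\<bar> \<le> eps / 2}"

text \<open>A set of points of T^m, given by a set S of representatives in R^m, is eps-dense
iff S + C_eps' = T^m for every eps' > eps, i.e. every point of R^m is congruent
mod Z^m to s + c with s in S and c in the cube.\<close>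
definition eps_dense :: "nat \<Rightarrow> (nat \<Rightarrow> real) set \<Rightarrow> real \<Rightarrow> bool" where
  "eps_dense m S eps \<longleftrightarrow>
     (\<forall>eps'>eps. \<forall>x. \<exists>s\<in>S. \<exists>c\<in>cube m eps'. torus_eq m x (\<lambda>j. s j + c j))"

definition S_theta :: "(nat \<Rightarrow> real) \<Rightarrow> (nat \<Rightarrow> real) set" where
  "S_theta \<theta> = {(\<lambda>j. t * \<theta> j) | t. True}"

end

theory Submission
  imports Defs
begin

definition polyop :: "'a::comm_ring_1 poly \<Rightarrow> (nat \<Rightarrow> 'a) \<Rightarrow> nat \<Rightarrow> 'a" where
  "polyop p f j = (\<Sum>i\<le>degree p. coeff p i * f (j+i))"

lemma polyop_bound:
  assumes "degree p \<le> N"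
  shows "polyop p f j = (\<Sum>i\<le>N. coeff p i * f (j+i))"
  unfolding polyop_def
  by (rule sum.mono_neutral_left) (use assms in \<open>auto simp: coeff_eq_0\<close>)

lemma polyop_add: "polyop (p + q) f j = polyop p f j + polyop q f j"
proof -
  let ?N = "max (degree p) (degree q)"
  have "degree (p+q) \<le> ?N" by (rule degree_add_le) auto
  then show ?thesis
    by (simp add: polyop_bound[of _ ?N] polyop_bound[of p ?N] polyop_bound[of q ?N]
        algebra_simps sum.distrib)
qed

lemma polyop_smult: "polyop (smult a p) f j = a * polyop p f j"
proof -
  have "polyop (smult a p) f j = (\<Sum>i\<le>degree p. coeff (smult a p) i * f (j+i))"
    by (rule polyop_bound) (rule degree_smult_le)
  then show ?thesis by (simp add: polyop_def sum_distrib_left mult.assoc)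
qed

lemma polyop_pCons: "polyop (pCons a p) f j = a * f j + polyop p f (Suc j)"
proof -
  have "degree (pCons a p) \<le> Suc (degree p)" by simp
  then have "polyop (pCons a p) f j = (\<Sum>i\<le>Suc (degree p). coeff (pCons a p) i * f (j+i))"
    by (rule polyop_bound)
  also have "\<dots> = a * f j + (\<Sum>i\<le>degree p. coeff p i * f (Suc j+i))"
    by (subst sum.atMost_Suc_shift) simp
  finally show ?thesis by (simp add: polyop_def)
qed

lemma polyop_0 [simp]: "polyop 0 f j = 0"
  by (simp add: polyop_def)

lemma polyop_mult: "polyop (p * q) f j = polyop p (polyop q f) j"
proof (induction p arbitrary: j)
  case 0
  then show ?case by simp
next
  case (pCons a p)
  have "pCons a p * q = smult a q + pCons 0 (p * q)"
    by (simp add: mult_pCons_left)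
  then show ?case
    by (simp add: polyop_add polyop_smult polyop_pCons pCons.IH)
qed

lemma polyop_1 [simp]: "polyop 1 f j = f j"
  by (simp add: polyop_def)

lemma polyop_lin: "polyop [:c, 1:] f j = c * f j + f (Suc j)"
  by (simp add: polyop_pCons)

lemma polyop_of_real:
  "polyop (map_poly of_real p :: complex poly) (\<lambda>i. of_real (f i)) j = of_real (polyop p f j)"
  by (simp add: polyop_def coeff_map_poly degree_map_poly)

lemma cnj_mult: "map_poly cnj (p * q) = map_poly cnj p * map_poly cnj q"
proof -
  have "poly (map_poly cnj (p * q)) = poly (map_poly cnj p * map_poly cnj q)"
    by (auto simp: fun_eq_iff)
  then show ?thesis using poly_eq_poly_eq_iff by blast
qed

lemma cnj_lin: "map_poly cnj [:- a, 1:] = [:- cnj a, 1:]"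
  by (simp add: map_poly_pCons)

lemma real_subprod:
  fixes \<alpha> :: "nat \<Rightarrow> complex"
  assumes "finite I" "map_poly cnj (\<Prod>i\<in>I. [:-\<alpha> i,1:]) = (\<Prod>i\<in>I. [:-\<alpha> i,1:])"
    and \<Phi>: "\<And>z. \<Phi> (cnj z) = \<Phi> z"
  shows "map_poly cnj (\<Prod>i\<in>{i\<in>I. \<Phi> (\<alpha> i)}. [:-\<alpha> i,1:]) = (\<Prod>i\<in>{i\<in>I. \<Phi> (\<alpha> i)}. [:-\<alpha> i,1:])"
  using assms(1,2)
proof (induction I rule: finite_psubset_induct)
  case (psubset I)
  show ?case
  proof (cases "I = {}")
    case True then show ?thesis by simp
  next
    case False
    then obtain i where i: "i \<in> I" by blast
    let ?L = "\<lambda>i. [:-\<alpha> i,1:]"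
    show ?thesis
    proof (cases "cnj (\<alpha> i) = \<alpha> i")
      case True
      have F: "(\<Prod>j\<in>I. ?L j) = ?L i * (\<Prod>j\<in>I-{i}. ?L j)"
        using psubset i by (simp add: prod.remove)
      have Lr: "map_poly cnj (?L i) = ?L i" using True by (simp add: cnj_lin)
      have "?L i * map_poly cnj (\<Prod>j\<in>I-{i}. ?L j) = ?L i * (\<Prod>j\<in>I-{i}. ?L j)"
        using psubset.prems F Lr by (metis cnj_mult)
      then have R: "map_poly cnj (\<Prod>j\<in>I-{i}. ?L j) = (\<Prod>j\<in>I-{i}. ?L j)"
        using mult_left_cancel[of "?L i"] by simp
      have IH: "map_poly cnj (\<Prod>j\<in>{j\<in>I-{i}. \<Phi> (\<alpha> j)}. ?L j) = (\<Prod>j\<in>{j\<in>I-{i}. \<Phi> (\<alpha> j)}. ?L j)"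
        using psubset.IH[of "I-{i}"] i psubset.hyps R by blast
      show ?thesis
      proof (cases "\<Phi> (\<alpha> i)")
        case True
        have "{j\<in>I. \<Phi> (\<alpha> j)} = insert i {j\<in>I-{i}. \<Phi> (\<alpha> j)}" using i True by auto
        then have "(\<Prod>j\<in>{j\<in>I. \<Phi> (\<alpha> j)}. ?L j) = ?L i * (\<Prod>j\<in>{j\<in>I-{i}. \<Phi> (\<alpha> j)}. ?L j)"
          using psubset.hyps by (simp add: prod.insert)
        then show ?thesis using IH Lr by (simp only: cnj_mult)
      next
        case False
        have "{j\<in>I. \<Phi> (\<alpha> j)} = {j\<in>I-{i}. \<Phi> (\<alpha> j)}" using i False by auto
        then show ?thesis using IH by simp
      qed
    next
      case False
      have "poly (\<Prod>j\<in>I. ?L j) (cnj (\<alpha> i)) = cnj (poly (\<Prod>j\<in>I. ?L j) (\<alpha> i))"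
        using psubset.prems by (metis poly_map_poly_cnj complex_cnj_cnj)
      also have "poly (\<Prod>j\<in>I. ?L j) (\<alpha> i) = 0"
        using psubset.hyps i by (auto simp: poly_prod)
      finally have "(\<Prod>j\<in>I. cnj (\<alpha> i) - \<alpha> j) = 0"
        by (simp add: poly_prod)
      then obtain k where k: "k \<in> I" "\<alpha> k = cnj (\<alpha> i)"
        using psubset.hyps by (auto simp: prod_zero_iff)
      have ki: "k \<noteq> i" using k False by auto
      have F: "(\<Prod>j\<in>I. ?L j) = (?L i * ?L k) * (\<Prod>j\<in>I-{i,k}. ?L j)"
      proof -
        have e1: "(\<Prod>j\<in>I. ?L j) = ?L i * (\<Prod>j\<in>I-{i}. ?L j)"
          using psubset i by (simp add: prod.remove)
        have e2: "(\<Prod>j\<in>I-{i}. ?L j) = ?L k * (\<Prod>j\<in>I-{i}-{k}. ?L j)"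
          using psubset k ki by (intro prod.remove) auto
        have e3: "I-{i}-{k} = I-{i,k}" by auto
        show ?thesis using e1 e2 e3 by (metis mult.assoc)
      qed
      have Lr: "map_poly cnj (?L i * ?L k) = ?L i * ?L k"
        using k by (simp only: cnj_mult cnj_lin complex_cnj_cnj mult.commute)
      have X: "(?L i * ?L k) * map_poly cnj (\<Prod>j\<in>I-{i,k}. ?L j) = (?L i * ?L k) * (\<Prod>j\<in>I-{i,k}. ?L j)"
        using psubset.prems F Lr by (metis cnj_mult)
      have nz: "?L i * ?L k \<noteq> 0" by (simp add: pCons_eq_0_iff)
      have R: "map_poly cnj (\<Prod>j\<in>I-{i,k}. ?L j) = (\<Prod>j\<in>I-{i,k}. ?L j)"
        using X mult_left_cancel[OF nz] by blast
      have IH: "map_poly cnj (\<Prod>j\<in>{j\<in>I-{i,k}. \<Phi> (\<alpha> j)}. ?L j) = (\<Prod>j\<in>{j\<in>I-{i,k}. \<Phi> (\<alpha> j)}. ?L j)"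
        using psubset.IH[of "I-{i,k}"] i psubset.hyps R by blast
      have Pk: "\<Phi> (\<alpha> k) = \<Phi> (\<alpha> i)" using k \<Phi> by simp
      show ?thesis
      proof (cases "\<Phi> (\<alpha> i)")
        case True
        have SE: "{j\<in>I. \<Phi> (\<alpha> j)} = insert i (insert k {j\<in>I-{i,k}. \<Phi> (\<alpha> j)})" using i k True Pk by auto
        have "(\<Prod>j\<in>{j\<in>I. \<Phi> (\<alpha> j)}. ?L j) = (?L i * ?L k) * (\<Prod>j\<in>{j\<in>I-{i,k}. \<Phi> (\<alpha> j)}. ?L j)"
        proof -
          let ?S = "{j\<in>I-{i,k}. \<Phi> (\<alpha> j)}"
          have f1: "finite ?S" "finite (insert k ?S)" using psubset.hyps by auto
          have n1: "k \<notin> ?S" "i \<notin> insert k ?S" using ki by auto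
          have "(\<Prod>j\<in>insert i (insert k ?S). ?L j) = ?L i * (?L k * (\<Prod>j\<in>?S. ?L j))"
            by (simp only: prod.insert[OF f1(2) n1(2)] prod.insert[OF f1(1) n1(1)])
          then show ?thesis using SE by (simp only: mult.assoc)
        qed
        then show ?thesis using IH Lr by (simp only: cnj_mult)
      next
        case False
        have "{j\<in>I. \<Phi> (\<alpha> j)} = {j\<in>I-{i,k}. \<Phi> (\<alpha> j)}" using i False Pk by auto
        then show ?thesis using IH by simp
      qed
    qed
  qed
qed

lemma polyop_upd_self:
  "polyop p (f(k := v)) k = polyop p f k + coeff p 0 * (v - f k)"
proof -
  have "polyop p (f(k := v)) k - polyop p f k = (\<Sum>i\<le>degree p. coeff p i * ((f(k := v)) (k+i) - f (k+i)))"
    by (simp add: polyop_def sum_subtractf algebra_simps)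
  also have "\<dots> = (\<Sum>i\<le>degree p. if i = 0 then coeff p 0 * (v - f k) else 0)"
    by (rule sum.cong) auto
  also have "\<dots> = coeff p 0 * (v - f k)" by simp
  finally show ?thesis by (simp add: algebra_simps)
qed

lemma polyop_upd_other:
  assumes "k < j"
  shows "polyop p (f(k := v)) j = polyop p f j"
  using assms by (simp add: polyop_def)

lemma greedy:
  fixes b :: "real poly" and r :: "nat \<Rightarrow> real" and n :: nat
  assumes b0: "coeff b 0 \<noteq> 0"
  shows "\<exists>g. (\<forall>j. \<bar>g j\<bar> \<le> 1/(2*\<bar>coeff b 0\<bar>)) \<and> (\<forall>j\<le>n. polyop b g j - r j \<in> \<int>)"
proof -
  let ?\<beta> = "1/(2*\<bar>coeff b 0\<bar>)"
  have "\<exists>g. (\<forall>j. \<bar>g j\<bar> \<le> ?\<beta>) \<and> (\<forall>j. j + t \<le> n \<longrightarrow> g j = 0)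
           \<and> (\<forall>j. n < j + t \<longrightarrow> j \<le> n \<longrightarrow> polyop b g j - r j \<in> \<int>)" for t
  proof (induction t)
    case 0
    show ?case by (rule exI[of _ "\<lambda>_. 0"]) (use b0 in auto)
  next
    case (Suc t)
    then obtain g where g1: "\<forall>j. \<bar>g j\<bar> \<le> ?\<beta>" and g2: "\<forall>j. j + t \<le> n \<longrightarrow> g j = 0"
      and g3: "\<forall>j. n < j + t \<longrightarrow> j \<le> n \<longrightarrow> polyop b g j - r j \<in> \<int>" by blast
    show ?case
    proof (cases "n < t")
      case True
      then show ?thesis using g1 g3 by (intro exI[of _ g]) auto
    next
      case False
      define k where "k = n - t"
      have kt: "k + t = n" using False k_def by simp
      define c where "c = r k - polyop b g k"
      define z where "z = \<lfloor>c + 1/2\<rfloor>"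
      have cz: "\<bar>c - z\<bar> \<le> 1/2" unfolding z_def by linarith
      define v where "v = (c - z) / coeff b 0"
      define g' where "g' = g(k := v)"
      have gk: "g k = 0" using g2 kt by auto
      have vb: "\<bar>v\<bar> \<le> ?\<beta>"
        using cz b0 by (simp add: v_def abs_divide divide_simps)
      have rowk: "polyop b g' k - r k \<in> \<int>"
      proof -
        have "polyop b g' k = polyop b g k + coeff b 0 * v"
          unfolding g'_def by (simp add: polyop_upd_self gk)
        also have "\<dots> = r k - z" using b0 by (simp add: v_def c_def)
        finally show ?thesis by simp
      qed
      show ?thesis
      proof (intro exI[of _ g'] conjI allI impI)
        fix j show "\<bar>g' j\<bar> \<le> ?\<beta>" using g1 vb by (simp add: g'_def)
      next
        fix j assume "j + Suc t \<le> n"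
        then show "g' j = 0" using g2 kt by (simp add: g'_def)
      next
        fix j assume j: "n < j + Suc t" "j \<le> n"
        show "polyop b g' j - r j \<in> \<int>"
        proof (cases "j = k")
          case True then show ?thesis using rowk by simp
        next
          case False
          then have "k < j" using j kt by simp
          then have "polyop b g' j = polyop b g j" unfolding g'_def by (rule polyop_upd_other)
          then show ?thesis using g3 j False kt by auto
        qed
      qed
    qed
  qed
  from this[of "Suc n"] show ?thesis by auto
qed

lemma qinv:
  fixes \<alpha> :: "nat \<Rightarrow> complex" and h :: "nat \<Rightarrow> complex"
  assumes "finite J" "\<forall>i\<in>J. cmod (\<alpha> i) < 1" "\<forall>j. cmod (h j) \<le> M"
  shows "\<exists>e. (\<forall>j. polyop (\<Prod>i\<in>J. [:-\<alpha> i,1:]) e j = h j) \<and>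
             (\<forall>j. cmod (e j) \<le> M / (\<Prod>i\<in>J. 1 - cmod (\<alpha> i)))"
  using assms
proof (induction J arbitrary: h M rule: finite_induct)
  case empty
  then show ?case by (intro exI[of _ h]) auto
next
  case (insert a J)
  have a1: "cmod (\<alpha> a) < 1" using insert by auto
  define f where "f = rec_nat 0 (\<lambda>j fj. h j + \<alpha> a * fj)"
  have f0: "f 0 = 0" and fS: "\<And>j. f (Suc j) = h j + \<alpha> a * f j" by (simp_all add: f_def)
  have M0: "0 \<le> M" using insert.prems(2) norm_ge_zero order_trans by blast
  have fb: "cmod (f j) \<le> M / (1 - cmod (\<alpha> a))" for j
  proof (induction j)
    case 0 then show ?case using M0 a1 by (simp add: f0)
  next
    case (Suc j)
    have "cmod (f (Suc j)) \<le> cmod (h j) + cmod (\<alpha> a) * cmod (f j)"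
      by (simp add: fS norm_mult[symmetric] norm_triangle_ineq)
    also have "\<dots> \<le> M + cmod (\<alpha> a) * (M / (1 - cmod (\<alpha> a)))"
      using insert.prems(2) Suc by (intro add_mono mult_left_mono) auto
    also have "\<dots> = M / (1 - cmod (\<alpha> a))" using a1 by (simp add: field_simps)
    finally show ?case .
  qed
  have fe: "polyop [:-\<alpha> a, 1:] f j = h j" for j
    by (simp add: polyop_lin fS)
  obtain e where e1: "\<forall>j. polyop (\<Prod>i\<in>J. [:-\<alpha> i,1:]) e j = f j"
    and e2: "\<forall>j. cmod (e j) \<le> (M / (1 - cmod (\<alpha> a))) / (\<Prod>i\<in>J. 1 - cmod (\<alpha> i))"
    using insert.IH[of f "M / (1 - cmod (\<alpha> a))"] insert.prems fb by auto
  show ?case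
  proof (intro exI[of _ e] conjI allI)
    fix j
    have "polyop (\<Prod>i\<in>insert a J. [:-\<alpha> i,1:]) e j = polyop ([:-\<alpha> a,1:] * (\<Prod>i\<in>J. [:-\<alpha> i,1:])) e j"
      using insert.hyps by simp
    also have "\<dots> = polyop [:-\<alpha> a,1:] f j"
    proof -
      have "polyop (\<Prod>i\<in>J. [:-\<alpha> i,1:]) e = f" using e1 by (simp add: fun_eq_iff)
      then show ?thesis by (simp only: polyop_mult)
    qed
    finally show "polyop (\<Prod>i\<in>insert a J. [:-\<alpha> i,1:]) e j = h j" using fe by simp
    show "cmod (e j) \<le> M / (\<Prod>i\<in>insert a J. 1 - cmod (\<alpha> i))"
      using e2 insert.hyps by (simp add: divide_divide_eq_left mult.commute)
  qed
qed

definition Tz :: "(nat \<Rightarrow> int) \<Rightarrow> nat \<Rightarrow> (nat \<Rightarrow> int) \<Rightarrow> nat \<Rightarrow> int" where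
  "Tz a d w j = (\<Sum>i=0..d. a i * w (j+i))"

lemma Tz_upd:
  "Tz a d (f(q := v)) j = Tz a d f j + (if j \<le> q \<and> q \<le> j + d then a (q - j) * (v - f q) else 0)"
proof -
  have "Tz a d (f(q := v)) j - Tz a d f j = (\<Sum>i=0..d. if i = q - j \<and> j \<le> q then a (q - j) * (v - f q) else 0)"
    unfolding Tz_def sum_subtractf[symmetric] by (rule sum.cong) (auto simp: algebra_simps)
  also have "\<dots> = (if j \<le> q \<and> q \<le> j + d then a (q - j) * (v - f q) else 0)"
    by (cases "j \<le> q") (auto simp: sum.delta)
  finally show ?thesis by (simp add: algebra_simps)
qed

lemma Tz_scale: "Tz a d (\<lambda>i. c * w i) j = c * Tz a d w j"
  by (simp add: Tz_def sum_distrib_left algebra_simps)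

lemma Tz_add: "Tz a d (\<lambda>i. w1 i + w2 i) j = Tz a d w1 j + Tz a d w2 j"
  by (simp add: Tz_def sum.distrib algebra_simps)

lemma Tz_ad_pow:
  assumes "a d \<noteq> 0"
  shows "\<forall>z. \<exists>w. \<forall>j\<in>{1..k}. Tz a d w j = a d ^ k * z j"
proof (induction k)
  case 0 then show ?case by auto
next
  case (Suc k)
  show ?case
  proof
    fix z
    obtain w where w: "\<forall>j\<in>{1..k}. Tz a d w j = a d ^ k * z j" using Suc by blast
    define \<delta> where "\<delta> = a d ^ k * z (Suc k) - Tz a d w (Suc k)"
    define w' where "w' = (\<lambda>i. a d * w i)(Suc k + d := a d * w (Suc k + d) + \<delta>)"
    have "\<forall>j\<in>{1..Suc k}. Tz a d w' j = a d ^ Suc k * z j"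
    proof
      fix j assume j: "j \<in> {1..Suc k}"
      show "Tz a d w' j = a d ^ Suc k * z j"
      proof (cases "j = Suc k")
        case True
        then show ?thesis by (simp add: w'_def Tz_upd Tz_scale \<delta>_def algebra_simps)
      next
        case False
        then have "j \<in> {1..k}" using j by auto
        then show ?thesis using w by (simp add: w'_def Tz_upd Tz_scale)
      qed
    qed
    then show "\<exists>w. \<forall>j\<in>{1..Suc k}. Tz a d w j = a d ^ Suc k * z j" by blast
  qed
qed

lemma Tz_modp:
  fixes p :: int
  assumes p: "prime p" and s: "s \<le> d" "\<not> p dvd a s" "\<forall>i<s. p dvd a i"
  shows "\<forall>z. \<exists>w. \<forall>j. n < j + t \<longrightarrow> j \<le> n \<longrightarrow> p dvd (Tz a d w j - z j)"
proof (induction t)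
  case 0 then show ?case by auto
next
  case (Suc t)
  obtain u v where uv: "u * a s + v * p = gcd (a s) p" using bezout_int by blast
  have "coprime (a s) p" using p s(2) by (simp add: prime_imp_coprime coprime_commute)
  then have g1: "gcd (a s) p = 1" by simp
  show ?case
  proof
    fix z
    obtain w where w: "\<forall>j. n < j + t \<longrightarrow> j \<le> n \<longrightarrow> p dvd (Tz a d w j - z j)" using Suc by blast
    show "\<exists>w. \<forall>j. n < j + Suc t \<longrightarrow> j \<le> n \<longrightarrow> p dvd (Tz a d w j - z j)"
    proof (cases "n < t")
      case True then show ?thesis using w by (intro exI[of _ w]) auto
    next
      case False
      define k where "k = n - t"
      have kt: "k + t = n" using False k_def by simp
      define \<delta> where "\<delta> = u * (z k - Tz a d w k)"
      define w' where "w' = w(k + s := w (k + s) + \<delta>)"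
      have "\<forall>j. n < j + Suc t \<longrightarrow> j \<le> n \<longrightarrow> p dvd (Tz a d w' j - z j)"
      proof (intro allI impI)
        fix j assume j: "n < j + Suc t" "j \<le> n"
        show "p dvd (Tz a d w' j - z j)"
        proof (cases "j = k")
          case True
          have "Tz a d w' j - z j = (u * a s - 1) * (z k - Tz a d w k)"
            using True s by (simp add: w'_def Tz_upd \<delta>_def algebra_simps)
          also have "u * a s - 1 = - (v * p)" using uv g1 by simp
          finally show ?thesis by simp
        next
          case False
          then have kj: "k < j" using j kt by simp
          have d1: "p dvd (Tz a d w j - z j)" using w j kj kt by auto
          have d2: "p dvd (if j \<le> k + s \<and> k + s \<le> j + d then a (k + s - j) * \<delta> else 0)"
            using kj s(3) by auto
          have "Tz a d w' j - z j = (Tz a d w j - z j) +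
                   (if j \<le> k + s \<and> k + s \<le> j + d then a (k + s - j) * \<delta> else 0)"
            by (simp add: w'_def Tz_upd)
          then show ?thesis using d1 d2 dvd_add by metis
        qed
      qed
      then show ?thesis by blast
    qed
  qed
qed

lemma Tz_modpk:
  fixes p :: int
  assumes "\<forall>z. \<exists>w. \<forall>j\<in>{1..n}. p dvd (Tz a d w j - z j)"
  shows "\<forall>z. \<exists>w. \<forall>j\<in>{1..n}. p ^ k dvd (Tz a d w j - z j)"
proof (induction k)
  case 0 then show ?case by auto
next
  case (Suc k)
  show ?case
  proof
    fix z
    obtain w1 where w1: "\<forall>j\<in>{1..n}. p ^ k dvd (Tz a d w1 j - z j)" using Suc by blast
    define y where "y = (\<lambda>j. (z j - Tz a d w1 j) div p ^ k)"
    have yd: "z j - Tz a d w1 j = p ^ k * y j" if "j \<in> {1..n}" for j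
      using w1 that unfolding y_def by (metis dvd_minus_iff minus_diff_eq dvd_mult_div_cancel)
    obtain w2 where w2: "\<forall>j\<in>{1..n}. p dvd (Tz a d w2 j - y j)" using assms by blast
    define w where "w = (\<lambda>i. w1 i + p ^ k * w2 i)"
    have "\<forall>j\<in>{1..n}. p ^ Suc k dvd (Tz a d w j - z j)"
    proof
      fix j assume j: "j \<in> {1..n}"
      have "Tz a d w j = Tz a d w1 j + p ^ k * Tz a d w2 j"
        unfolding w_def by (simp only: Tz_add Tz_scale)
      then have "Tz a d w j - z j = p ^ k * (Tz a d w2 j - y j)"
        using yd[OF j] by (simp add: algebra_simps)
      then show "p ^ Suc k dvd (Tz a d w j - z j)" using w2 j by (simp add: mult_dvd_mono)
    qed
    then show "\<exists>w. \<forall>j\<in>{1..n}. p ^ Suc k dvd (Tz a d w j - z j)" by blast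
  qed
qed

definition Iset :: "(nat \<Rightarrow> int) \<Rightarrow> nat \<Rightarrow> nat \<Rightarrow> int set" where
  "Iset a d n = {N. \<forall>z. \<exists>w. \<forall>j\<in>{1..n}. Tz a d w j = N * z j}"

lemma Iset_lin:
  assumes "N \<in> Iset a d n" "M \<in> Iset a d n"
  shows "u * N + v * M \<in> Iset a d n"
  unfolding Iset_def
proof (safe)
  fix z
  obtain w1 where w1: "\<forall>j\<in>{1..n}. Tz a d w1 j = N * z j" using assms(1) by (auto simp: Iset_def)
  obtain w2 where w2: "\<forall>j\<in>{1..n}. Tz a d w2 j = M * z j" using assms(2) by (auto simp: Iset_def)
  show "\<exists>w. \<forall>j\<in>{1..n}. Tz a d w j = (u * N + v * M) * z j"
    by (rule exI[of _ "\<lambda>i. u * w1 i + v * w2 i"]) (use w1 w2 in \<open>simp add: Tz_add Tz_scale algebra_simps\<close>)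
qed

lemma Iset_prime:
  assumes ad: "a d \<noteq> 0" and p: "prime p" and s: "s \<le> d" "\<not> p dvd a s" "\<forall>i<s. p dvd a i"
  shows "\<exists>N\<in>Iset a d n. \<not> p dvd N"
proof -
  have m1: "\<forall>z. \<exists>w. \<forall>j\<in>{1..n}. p dvd (Tz a d w j - z j)"
    using Tz_modp[OF p s, of n "Suc n"] by fastforce
  have AD: "a d ^ n \<in> Iset a d n" using Tz_ad_pow[of a d n] ad by (simp add: Iset_def)
  have "a d ^ n \<noteq> 0" using ad by simp
  moreover have "\<not> is_unit p" using p by auto
  ultimately obtain K where K: "a d ^ n = p ^ multiplicity p (a d ^ n) * K" "\<not> p dvd K"
    using multiplicity_decompose' by metis
  let ?k = "multiplicity p (a d ^ n)"
  have "K \<in> Iset a d n"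
    unfolding Iset_def
  proof safe
    fix z
    obtain w where w: "\<forall>j\<in>{1..n}. p ^ ?k dvd (Tz a d w j - z j)"
      using Tz_modpk[OF m1] by blast
    define y where "y = (\<lambda>j. (z j - Tz a d w j) div p ^ ?k)"
    have yd: "z j - Tz a d w j = p ^ ?k * y j" if "j \<in> {1..n}" for j
      using w that unfolding y_def by (metis dvd_minus_iff minus_diff_eq dvd_mult_div_cancel)
    obtain w2 where w2: "\<forall>j\<in>{1..n}. Tz a d w2 j = a d ^ n * y j"
      using AD by (auto simp: Iset_def)
    show "\<exists>w. \<forall>j\<in>{1..n}. Tz a d w j = K * z j"
    proof (intro exI[of _ "\<lambda>i. K * w i + w2 i"] ballI)
      fix j assume j: "j \<in> {1..n}"
      have "Tz a d (\<lambda>i. K * w i + w2 i) j = K * Tz a d w j + a d ^ n * y j"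
        using w2 j by (simp add: Tz_add Tz_scale)
      also have "\<dots> = K * (Tz a d w j + p ^ ?k * y j)" by (subst K(1)) (simp add: algebra_simps)
      also have "\<dots> = K * z j" using yd[OF j] by simp
      finally show "Tz a d (\<lambda>i. K * w i + w2 i) j = K * z j" .
    qed
  qed
  then show ?thesis using K by blast
qed

lemma Iset_one:
  assumes ad: "a d \<noteq> 0" and prim: "\<forall>p. prime p \<longrightarrow> (\<exists>i\<le>d. \<not> p dvd a i)"
  shows "1 \<in> Iset a d n"
proof -
  have pr: "\<exists>N\<in>Iset a d n. \<not> p dvd N" if p: "prime p" for p
  proof -
    define s where "s = (LEAST i. \<not> p dvd a i)"
    obtain i0 where i0: "i0 \<le> d" "\<not> p dvd a i0" using prim p by blast
    have s1: "\<not> p dvd a s" unfolding s_def by (rule LeastI[of _ i0]) (use i0 in auto)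
    have s2: "s \<le> d" unfolding s_def using i0 by (meson Least_le le_trans)
    have s3: "\<forall>i<s. p dvd a i" unfolding s_def using not_less_Least by blast
    show ?thesis by (rule Iset_prime[OF ad p s2 s1 s3])
  qed
  have main: "\<forall>N. nat \<bar>N\<bar> = m \<longrightarrow> N \<in> Iset a d n \<longrightarrow> N \<noteq> 0 \<longrightarrow> 1 \<in> Iset a d n" for m
  proof (induction m rule: less_induct)
    case (less m)
    show ?case
    proof (intro allI impI)
      fix N assume N: "nat \<bar>N\<bar> = m" "N \<in> Iset a d n" "N \<noteq> 0"
      show "1 \<in> Iset a d n"
      proof (cases "is_unit N")
        case True
        then have "\<bar>N\<bar> \<le> 1" by (simp add: dvd_imp_le_int)
        then have "N = 1 \<or> N = -1" using N(3) by linarith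
        then show ?thesis using Iset_lin[OF N(2) N(2), of "-1" 0] N(2) by auto
      next
        case False
        then obtain p where p: "p dvd N" "prime p" using prime_divisor_exists N(3) by blast
        obtain M where M: "M \<in> Iset a d n" "\<not> p dvd M" using pr p(2) by blast
        obtain u v where uv: "u * N + v * M = gcd N M" using bezout_int by blast
        have G: "gcd N M \<in> Iset a d n" using Iset_lin[OF N(2) M(1)] uv by metis
        have G0: "gcd N M \<noteq> 0" using N(3) by simp
        have "\<bar>gcd N M\<bar> \<le> \<bar>N\<bar>" using N(3) dvd_imp_le_int[of N "gcd N M"] by simp
        moreover have "\<bar>gcd N M\<bar> \<noteq> \<bar>N\<bar>"
        proof
          assume "\<bar>gcd N M\<bar> = \<bar>N\<bar>"
          then have "N dvd gcd N M" by (metis abs_dvd_iff dvd_refl)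
          then have "p dvd M" using p(1) by (meson dvd_trans gcd_dvd2)
          then show False using M by simp
        qed
        ultimately have "nat \<bar>gcd N M\<bar> < m" using N(1) by linarith
        then show ?thesis using less.IH G G0 by blast
      qed
    qed
  qed
  have "a d ^ n \<in> Iset a d n" using Tz_ad_pow[of a d n] ad by (simp add: Iset_def)
  then show ?thesis using main ad by auto
qed

lemma Tz_surj:
  assumes ad: "a d \<noteq> 0" and prim: "\<forall>p. prime p \<longrightarrow> (\<exists>i\<le>d. \<not> p dvd a i)"
  shows "\<exists>w. \<forall>j\<in>{1..n}. Tz a d w j = z j"
  using Iset_one[OF assms, of n] by (auto simp: Iset_def)

definition Rec :: "(nat \<Rightarrow> int) \<Rightarrow> nat \<Rightarrow> nat \<Rightarrow> (nat \<Rightarrow> real) \<Rightarrow> bool" where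
  "Rec a d m y \<longleftrightarrow> (\<forall>j\<in>{1..m-d}. (\<Sum>i=0..d. of_int (a i) * y (j+i)) = 0)"

lemma rec_coeffs:
  assumes ad: "a d \<noteq> 0" and d0: "0 < d"
  shows "1 \<le> j \<Longrightarrow> j \<le> m \<Longrightarrow> \<exists>c::nat\<Rightarrow>int. \<forall>y. Rec a d m y \<longrightarrow>
            of_int (a d) ^ j * y j = (\<Sum>i=1..d. of_int (c i) * y i)"
proof (induction j rule: less_induct)
  case (less j)
  show ?case
  proof (cases "j \<le> d")
    case True
    show ?thesis
    proof (intro exI[of _ "\<lambda>i. if i = j then a d ^ j else 0"] allI impI)
      fix y
      have "(\<Sum>i=1..d. of_int (if i = j then a d ^ j else 0) * y i) =
            (\<Sum>i=1..d. if i = j then of_int (a d) ^ j * y j else 0)"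
        by (rule sum.cong) auto
      also have "\<dots> = of_int (a d) ^ j * y j" using True less.prems by (simp add: sum.delta')
      finally show "of_int (a d) ^ j * y j = (\<Sum>i=1..d. of_int (if i = j then a d ^ j else 0) * y i)" by simp
    qed
  next
    case False
    define r where "r = j - d"
    have r: "r \<in> {1..m-d}" "j = r + d" using False less.prems by (auto simp: r_def)
    have "\<forall>k. \<exists>c::nat\<Rightarrow>int. k < j \<longrightarrow> 1 \<le> k \<longrightarrow> k \<le> m \<longrightarrow> (\<forall>y. Rec a d m y \<longrightarrow>
            of_int (a d) ^ k * y k = (\<Sum>i=1..d. of_int (c i) * y i))"
      using less.IH less.prems by auto
    then obtain C where C: "\<And>k y. k < j \<Longrightarrow> 1 \<le> k \<Longrightarrow> k \<le> m \<Longrightarrow> Rec a d m y \<Longrightarrow>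
            of_int (a d) ^ k * y k = (\<Sum>i=1..d. of_int (C k i) * y i)"
      by metis
    define c where "c = (\<lambda>i. - (\<Sum>i'<d. a i' * a d ^ (j - 1 - (r + i')) * C (r + i') i))"
    show ?thesis
    proof (intro exI[of _ c] allI impI)
      fix y assume y: "Rec a d m y"
      have row: "(\<Sum>i=0..d. of_int (a i) * y (r+i)) = 0" using y r unfolding Rec_def by blast
      have "{0..d} = insert d {0..<d}" by auto
      then have "(\<Sum>i=0..d. of_int (a i) * y (r+i)) = of_int (a d) * y j + (\<Sum>i<d. of_int (a i) * y (r+i))"
        using r by (simp add: atLeast0LessThan)
      then have ayj: "of_int (a d) * y j = - (\<Sum>i<d. of_int (a i) * y (r+i))" using row by simp
      have jpos: "j = Suc (j - 1)" using r d0 by simp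
      have "of_int (a d) ^ j * y j = of_int (a d) ^ (j - 1) * (of_int (a d) * y j)"
        by (subst jpos) (simp add: algebra_simps)
      also have "\<dots> = - (\<Sum>i'<d. of_int (a i') * (of_int (a d) ^ (j - 1) * y (r+i')))"
        by (simp only: ayj) (simp add: sum_distrib_left sum_negf algebra_simps)
      also have "\<dots> = - (\<Sum>i'<d. of_int (a i') * (of_int (a d) ^ (j - 1 - (r + i')) *
                          (\<Sum>i=1..d. of_int (C (r+i') i) * y i)))"
      proof -
        have "of_int (a d) ^ (j - 1) * y (r+i') = of_int (a d) ^ (j - 1 - (r + i')) *
                          (\<Sum>i=1..d. of_int (C (r+i') i) * y i)" if i': "i' < d" for i'
        proof -
          have "of_int (a d) ^ (j - 1) * y (r+i') = of_int (a d) ^ (j - 1 - (r + i')) * (of_int (a d) ^ (r+i') * y (r+i'))"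
          proof -
            have "j - 1 = (j - 1 - (r + i')) + (r + i')" using i' r by simp
            then show ?thesis by (metis (no_types) power_add mult.assoc)
          qed
          also have "of_int (a d) ^ (r+i') * y (r+i') = (\<Sum>i=1..d. of_int (C (r+i') i) * y i)"
            using C[of "r+i'" y] i' r y less.prems by auto
          finally show ?thesis .
        qed
        then show ?thesis by (intro arg_cong[where f=uminus] sum.cong) auto
      qed
      also have "\<dots> = (\<Sum>i=1..d. of_int (c i) * y i)"
        unfolding c_def
        apply (simp add: sum_distrib_left sum_distrib_right sum_negf[symmetric] algebra_simps)
        by (rule sum.swap)
      finally show "of_int (a d) ^ j * y j = (\<Sum>i=1..d. of_int (c i) * y i)" .
    qed
  qed
qed

lemma kron_apply:
  fixes a :: "nat \<Rightarrow> int" and \<theta> v :: "nat \<Rightarrow> real"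
  assumes ad: "a d \<noteq> 0" and d0: "0 < d" and dm: "d \<le> m"
    and R\<theta>: "Rec a d m \<theta>" and Rv: "Rec a d m v"
    and indep: "\<forall>q :: nat \<Rightarrow> rat. (\<Sum>i=1..d. of_rat (q i) * \<theta> i) = 0 \<longrightarrow> (\<forall>i\<in>{1..d}. q i = 0)"
    and \<eta>: "\<eta> > 0"
  shows "\<exists>t h. \<forall>j\<in>{1..m}. \<bar>t * \<theta> j - v j - of_int (h j)\<bar> < \<eta>"
proof -
  interpret Modules.module "(\<lambda>r. (*) (real_of_int r))"
    by (simp add: Modules.module.intro distrib_left mult.commute)
  have "\<forall>j. \<exists>c::nat\<Rightarrow>int. j \<in> {1..m} \<longrightarrow> (\<forall>y. Rec a d m y \<longrightarrow>
            of_int (a d) ^ j * y j = (\<Sum>i=1..d. of_int (c i) * y i))"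
    using rec_coeffs[of a d _ m] ad d0 by auto
  then obtain C0 where C0: "\<And>j y. j \<in> {1..m} \<Longrightarrow> Rec a d m y \<Longrightarrow>
            of_int (a d) ^ j * y j = (\<Sum>i=1..d. of_int (C0 j i) * y i)" by metis
  define N :: real where "N = of_int (a d) ^ m"
  have N0: "N \<noteq> 0" using ad by (simp add: N_def)
  define C where "C = (\<lambda>j i. a d ^ (m - j) * C0 j i)"
  have C: "N * y j = (\<Sum>i=1..d. of_int (C j i) * y i)" if "j \<in> {1..m}" "Rec a d m y" for j y
  proof -
    have "N * y j = of_int (a d) ^ (m - j) * (of_int (a d) ^ j * y j)"
      using that(1) by (simp add: N_def power_add[symmetric])
    also have "\<dots> = (\<Sum>i=1..d. of_int (C j i) * y i)"
      using C0[OF that] by (simp add: C_def sum_distrib_left algebra_simps)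
    finally show ?thesis .
  qed
  define \<beta> where "\<beta> = (\<lambda>k. \<theta> (Suc k) / N)"
  define z where "z = (\<lambda>k. v (Suc k) / N)"
  define B :: real where "B = 1 + (\<Sum>j=1..m. \<Sum>i=1..d. \<bar>of_int (C j i)\<bar>)"
  have B1: "B \<ge> 1" unfolding B_def by (simp add: sum_nonneg)
  define \<eta>' where "\<eta>' = \<eta> / B"
  have \<eta>': "\<eta>' > 0" using \<eta> B1 by (simp add: \<eta>'_def)
  have inj: "inj_on \<beta> {..<d}"
  proof (rule inj_onI)
    fix k k' assume k: "k \<in> {..<d}" "k' \<in> {..<d}" and eq: "\<beta> k = \<beta> k'"
    show "k = k'"
    proof (rule ccontr)
      assume ne: "k \<noteq> k'"
      define q :: "nat \<Rightarrow> rat" where "q = (\<lambda>i. (if i = Suc k then 1 else 0) + (if i = Suc k' then -1 else 0))"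
      have "(\<Sum>i=1..d. of_rat (q i) * \<theta> i) = (\<Sum>i=1..d. (if i = Suc k then \<theta> i else 0) + (if i = Suc k' then - \<theta> i else 0))"
        by (rule sum.cong) (auto simp: q_def)
      also have "\<dots> = \<theta> (Suc k) - \<theta> (Suc k')" using k by (simp add: sum.distrib sum.delta')
      also have "\<dots> = 0" using eq N0 by (simp add: \<beta>_def)
      finally have "q (Suc k) = 0" using indep k by auto
      then show False using ne by (simp add: q_def)
    qed
  qed
  have ind: "independent (\<beta> ` {..<d})"
  proof
    assume "dependent (\<beta> ` {..<d})"
    then obtain T u where T: "finite T" "T \<subseteq> \<beta> ` {..<d}" "(\<Sum>x\<in>T. of_int (u x) * x) = 0"
      and x: "\<exists>x\<in>T. u x \<noteq> 0" unfolding dependent_explicit by blast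
    define S where "S = {i\<in>{1..d}. \<beta> (i - 1) \<in> T}"
    have injS: "inj_on (\<lambda>i. \<beta> (i - 1)) S"
    proof (rule inj_onI)
      fix i i' assume "i \<in> S" "i' \<in> S" "\<beta> (i - 1) = \<beta> (i' - 1)"
      then show "i = i'" using inj_onD[OF inj, of "i-1" "i'-1"] by (force simp: S_def)
    qed
    have imS: "(\<lambda>i. \<beta> (i - 1)) ` S = T"
    proof
      show "(\<lambda>i. \<beta> (i - 1)) ` S \<subseteq> T" by (auto simp: S_def)
      show "T \<subseteq> (\<lambda>i. \<beta> (i - 1)) ` S"
      proof
        fix x assume "x \<in> T"
        then obtain k where k: "k < d" "x = \<beta> k" using T(2) by auto
        then have "Suc k \<in> S" using \<open>x \<in> T\<close> by (auto simp: S_def)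
        then show "x \<in> (\<lambda>i. \<beta> (i - 1)) ` S" using k by (intro image_eqI[of _ _ "Suc k"]) auto
      qed
    qed
    define q :: "nat \<Rightarrow> rat" where "q = (\<lambda>i. if i \<in> S then of_int (u (\<beta> (i - 1))) else 0)"
    have "(\<Sum>i=1..d. of_rat (q i) * \<theta> i) = (\<Sum>i\<in>S. of_int (u (\<beta> (i - 1))) * \<theta> i)"
      unfolding q_def by (rule sum.mono_neutral_cong_right) (auto simp: S_def)
    also have "\<dots> = N * (\<Sum>i\<in>S. of_int (u (\<beta> (i - 1))) * \<beta> (i - 1))"
      by (subst sum_distrib_left, rule sum.cong) (auto simp: S_def \<beta>_def N0)
    also have "(\<Sum>i\<in>S. of_int (u (\<beta> (i - 1))) * \<beta> (i - 1)) = (\<Sum>x\<in>T. of_int (u x) * x)"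
      using sum.reindex[OF injS, of "\<lambda>x. of_int (u x) * x"] imS by simp
    finally have "(\<Sum>i=1..d. of_rat (q i) * \<theta> i) = 0" using T(3) by simp
    then have q0: "\<forall>i\<in>{1..d}. q i = 0" using indep by blast
    obtain x0 where x0: "x0 \<in> T" "u x0 \<noteq> 0" using x by blast
    then obtain i where iS: "i \<in> S" "x0 = \<beta> (i - 1)" using imS by blast
    then have "q i = 0" using q0 by (simp add: S_def)
    moreover have "q i = of_int (u x0)" using iS by (simp add: q_def)
    ultimately show False using x0 by simp
  qed
  obtain t h where th: "\<And>k. k < d \<Longrightarrow> \<bar>t * \<beta> k - of_int (h k) - z k\<bar> < \<eta>'"
    using Kronecker_thm_1[OF ind inj \<eta>', of z] by blast
  define H where "H = (\<lambda>j. \<Sum>i=1..d. C j i * h (i - 1))"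
  show ?thesis
  proof (intro exI[of _ t] exI[of _ H] ballI)
    fix j assume j: "j \<in> {1..m}"
    have "t * \<theta> j - v j - of_int (H j) = (t * (N * \<theta> j) - N * v j) / N - of_int (H j)"
      using N0 by (simp add: field_simps)
    also have "\<dots> = (\<Sum>i=1..d. of_int (C j i) * (t * \<beta> (i - 1) - of_int (h (i - 1)) - z (i - 1)))"
      using N0 unfolding C[OF j R\<theta>] C[OF j Rv] H_def
      apply (simp add: \<beta>_def z_def sum_distrib_left sum_divide_distrib sum_subtractf[symmetric]
          field_simps)
      by (rule sum.cong) (auto simp: field_simps)
    finally have eq: "t * \<theta> j - v j - of_int (H j) = \<dots>" .
    have "\<bar>t * \<theta> j - v j - of_int (H j)\<bar> \<le> (\<Sum>i=1..d. \<bar>of_int (C j i)\<bar> * \<eta>')"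
      unfolding eq
    proof (rule order_trans[OF sum_abs], rule sum_mono)
      fix i assume i: "i \<in> {1..d}"
      have "\<bar>t * \<beta> (i - 1) - of_int (h (i - 1)) - z (i - 1)\<bar> \<le> \<eta>'"
        using th[of "i - 1"] i by fastforce
      then show "\<bar>of_int (C j i) * (t * \<beta> (i - 1) - of_int (h (i - 1)) - z (i - 1))\<bar> \<le> \<bar>of_int (C j i)\<bar> * \<eta>'"
        by (simp add: abs_mult mult_left_mono)
    qed
    also have "\<dots> = (\<Sum>i=1..d. \<bar>of_int (C j i)\<bar>) * \<eta>'" by (simp add: sum_distrib_right)
    also have "\<dots> \<le> (B - 1) * \<eta>'"
    proof (rule mult_right_mono)
      show "(\<Sum>i=1..d. \<bar>real_of_int (C j i)\<bar>) \<le> B - 1"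
      proof -
        have "(\<Sum>i=1..d. \<bar>real_of_int (C j i)\<bar>) \<le> (\<Sum>j=1..m. \<Sum>i=1..d. \<bar>real_of_int (C j i)\<bar>)"
          by (rule member_le_sum[of j "{1..m}" "\<lambda>j. \<Sum>i=1..d. \<bar>real_of_int (C j i)\<bar>"])
             (use j in \<open>auto simp: sum_nonneg\<close>)
        then show ?thesis unfolding B_def by simp
      qed
    qed (use \<eta>' in simp)
    also have "\<dots> < B * \<eta>'" using \<eta>' by (simp add: algebra_simps)
    also have "\<dots> = \<eta>" using B1 by (simp add: \<eta>'_def)
    finally show "\<bar>t * \<theta> j - v j - of_int (H j)\<bar> < \<eta>" .
  qed
qed

lemma real_poly_of_cnj:
  assumes "map_poly cnj p = p"
  shows "map_poly of_real (map_poly Re p) = p"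
proof (rule poly_eqI)
  fix i
  have "cnj (coeff p i) = coeff p i" using assms by (metis coeff_map_poly complex_cnj_zero)
  then have "coeff p i \<in> \<real>" using Reals_cnj_iff by blast
  then show "coeff (map_poly of_real (map_poly Re p)) i = coeff p i"
    by (simp add: coeff_map_poly Reals_def)
qed

lemma cnj_smult: "map_poly cnj (smult c p) = smult (cnj c) (map_poly cnj p)"
  by (rule poly_eqI) (simp add: coeff_map_poly)

theorem mainTheorem2:
  fixes m d :: nat and A :: "int poly" and \<alpha> :: "nat \<Rightarrow> complex"
    and \<theta> :: "nat \<Rightarrow> real" and \<epsilon> :: real
  assumes "0 < d" and "d \<le> m"
    and "degree A = d"
    and "content A = 1"
    and "coeff A 0 \<noteq> 0"
    and "map_poly of_int A = smult (of_int (coeff A d)) (\<Prod>i=1..d. [:- \<alpha> i, 1:])"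
    and "\<forall>j\<in>{1..m-d}. (\<Sum>i=0..d. of_int (coeff A i) * \<theta> (j + i)) = 0"
    and "\<forall>q :: nat \<Rightarrow> rat. (\<Sum>i=1..d. of_rat (q i) * \<theta> i) = 0 \<longrightarrow> (\<forall>i\<in>{1..d}. q i = 0)"
    and "\<epsilon> \<ge> 1 / (\<bar>of_int (coeff A d)\<bar> * (\<Prod>i=1..d. max (cmod (\<alpha> i)) (1 - cmod (\<alpha> i))))"
  shows "eps_dense m (S_theta \<theta>) \<epsilon>"
proof -
  note d0 = assms(1) and dm = assms(2) and degA = assms(3) and cont = assms(4)
    and fac = assms(6) and rec\<theta> = assms(7) and indep = assms(8) and epsb = assms(9)
  define a where "a = (\<lambda>i. coeff A i)"
  define ad where "ad = coeff A d"
  have A0: "A \<noteq> 0" using d0 degA by auto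
  have ad0: "ad \<noteq> 0" using A0 degA unfolding ad_def
    by (metis leading_coeff_0_iff)
  have prim: "\<forall>p. prime p \<longrightarrow> (\<exists>i\<le>d. \<not> p dvd a i)"
  proof (intro allI impI, rule ccontr)
    fix p :: int assume p: "prime p" and "\<not> (\<exists>i\<le>d. \<not> p dvd a i)"
    then have H: "\<And>i. i \<le> d \<Longrightarrow> p dvd coeff A i" by (simp add: a_def)
    have "p dvd coeff A n" for n
    proof (cases "n \<le> d")
      case True then show ?thesis using H by blast
    next
      case False then have "coeff A n = 0" using degA by (intro coeff_eq_0) simp
      then show ?thesis by simp
    qed
    then have "[:p:] dvd A" using const_poly_dvd_iff by blast
    then have "p dvd content A" using const_poly_dvd_iff_dvd_content by blast
    then have "is_unit p" using cont by metis
    then show False using p not_prime_unit by blast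
  qed
  let ?L = "\<lambda>i. [:- \<alpha> i, 1:]"
  define F where "F = (\<Prod>i=1..d. ?L i)"
  define J where "J = {i\<in>{1..d}. cmod (\<alpha> i) < 1/2}"
  define K where "K = {i\<in>{1..d}. \<not> cmod (\<alpha> i) < 1/2}"
  define Q where "Q = (\<Prod>i\<in>J. ?L i)"
  define P where "P = (\<Prod>i\<in>K. ?L i)"
  have JK: "J \<inter> K = {}" "J \<union> K = {1..d}" "finite J" "finite K" by (auto simp: J_def K_def)
  have FPQ: "F = P * Q" unfolding F_def P_def Q_def
    using prod.union_disjoint[OF JK(4) JK(3), of ?L] JK by (metis Int_commute Un_commute)
  have adc: "(of_int ad :: complex) \<noteq> 0" using ad0 by simp
  have Fr: "map_poly cnj F = F"
  proof -
    have "map_poly cnj (map_poly of_int A :: complex poly) = map_poly of_int A"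
      by (rule poly_eqI) (simp add: coeff_map_poly)
    then have "smult (of_int ad) (map_poly cnj F) = smult (of_int ad) F"
      using fac by (simp add: F_def ad_def cnj_smult)
    then show ?thesis using smult_cancel adc by blast
  qed
  have Qr: "map_poly cnj Q = Q"
    using real_subprod[of "{1..d}" \<alpha> "\<lambda>z. cmod z < 1/2"] Fr unfolding F_def Q_def J_def by simp
  have Pr: "map_poly cnj P = P"
    using real_subprod[of "{1..d}" \<alpha> "\<lambda>z. \<not> cmod z < 1/2"] Fr unfolding F_def P_def K_def by simp
  define bC where "bC = smult (of_int ad) P"
  have bCr: "map_poly cnj bC = bC" using Pr by (simp add: bC_def cnj_smult)
  define bR where "bR = map_poly Re bC"
  have bR: "map_poly of_real bR = bC" using real_poly_of_cnj[OF bCr] by (simp add: bR_def)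
  have cP0: "coeff P 0 = (\<Prod>i\<in>K. - \<alpha> i)"
    unfolding P_def poly_0_coeff_0[symmetric] by (simp add: poly_prod)
  have b0abs: "\<bar>coeff bR 0\<bar> = \<bar>of_int ad\<bar> * (\<Prod>i\<in>K. cmod (\<alpha> i))"
  proof -
    have "of_real (coeff bR 0) = coeff bC 0" using bR by (metis coeff_map_poly of_real_0)
    then have "\<bar>coeff bR 0\<bar> = cmod (coeff bC 0)" by (metis norm_of_real)
    also have "\<dots> = \<bar>of_int ad\<bar> * (\<Prod>i\<in>K. cmod (\<alpha> i))"
      by (simp add: bC_def cP0 norm_mult prod_norm[symmetric])
    finally show ?thesis .
  qed
  have Kpos: "(\<Prod>i\<in>K. cmod (\<alpha> i)) > 0"
    by (rule prod_pos) (auto simp: K_def)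
  have b00: "coeff bR 0 \<noteq> 0" using b0abs ad0 Kpos by auto
  have Jpos: "(\<Prod>i\<in>J. 1 - cmod (\<alpha> i)) > 0"
    by (rule prod_pos) (auto simp: J_def)
  define B where "B = \<bar>of_int ad\<bar> * (\<Prod>i=1..d. max (cmod (\<alpha> i)) (1 - cmod (\<alpha> i)))"
  have Bsplit: "B = \<bar>coeff bR 0\<bar> * (\<Prod>i\<in>J. 1 - cmod (\<alpha> i))"
  proof -
    have "(\<Prod>i=1..d. max (cmod (\<alpha> i)) (1 - cmod (\<alpha> i))) =
          (\<Prod>i\<in>K. max (cmod (\<alpha> i)) (1 - cmod (\<alpha> i))) * (\<Prod>i\<in>J. max (cmod (\<alpha> i)) (1 - cmod (\<alpha> i)))"
      using prod.union_disjoint[OF JK(4) JK(3), of "\<lambda>i. max (cmod (\<alpha> i)) (1 - cmod (\<alpha> i))"] JK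
      by (metis Int_commute Un_commute)
    also have "(\<Prod>i\<in>K. max (cmod (\<alpha> i)) (1 - cmod (\<alpha> i))) = (\<Prod>i\<in>K. cmod (\<alpha> i))"
      by (rule prod.cong) (auto simp: K_def)
    also have "(\<Prod>i\<in>J. max (cmod (\<alpha> i)) (1 - cmod (\<alpha> i))) = (\<Prod>i\<in>J. 1 - cmod (\<alpha> i))"
      by (rule prod.cong) (auto simp: J_def)
    finally show ?thesis by (simp add: B_def b0abs)
  qed
  have Bpos: "B > 0" using Bsplit b00 Jpos by simp
  have AC: "(map_poly of_int A :: complex poly) = bC * Q"
    using fac FPQ by (simp add: bC_def F_def ad_def mult_smult_left)
  have degAC: "degree (map_poly of_int A :: complex poly) = d"
    using degA by (subst degree_map_poly) auto
  show ?thesis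
    unfolding eps_dense_def
  proof (intro allI impI)
    fix eps' :: real and x :: "nat \<Rightarrow> real"
    assume eps': "eps' > \<epsilon>"
    define n where "n = m - d"
    define r where "r = (\<lambda>j. - (\<Sum>i=0..d. of_int (a i) * x (j+i)))"
    obtain g where g1: "\<forall>j. \<bar>g j\<bar> \<le> 1/(2*\<bar>coeff bR 0\<bar>)"
      and g2: "\<forall>j\<le>n. polyop bR g j - r j \<in> \<int>"
      using greedy[OF b00, of n r] by blast
    obtain eC where e1: "\<forall>j. polyop Q eC j = of_real (g j)"
      and e2: "\<forall>j. cmod (eC j) \<le> (1/(2*\<bar>coeff bR 0\<bar>)) / (\<Prod>i\<in>J. 1 - cmod (\<alpha> i))"
    proof -
      have J1: "\<forall>i\<in>J. cmod (\<alpha> i) < 1" by (auto simp: J_def)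
      have g1': "\<forall>j. cmod (complex_of_real (g j)) \<le> 1/(2*\<bar>coeff bR 0\<bar>)" using g1 by simp
      show ?thesis using qinv[OF JK(3) J1 g1'] that unfolding Q_def by blast
    qed
    define e where "e = (\<lambda>j. Re (eC j))"
    have ebound: "\<bar>e j\<bar> \<le> 1 / (2 * B)" for j
    proof -
      have "\<bar>e j\<bar> \<le> cmod (eC j)" unfolding e_def by (rule abs_Re_le_cmod)
      also have "\<dots> \<le> (1/(2*\<bar>coeff bR 0\<bar>)) / (\<Prod>i\<in>J. 1 - cmod (\<alpha> i))" using e2 by blast
      also have "\<dots> = 1 / (2 * B)" using Bsplit by simp
      finally show ?thesis .
    qed
    have erow: "(\<Sum>i=0..d. of_int (a i) * e (j+i)) = polyop bR g j" for j
    proof -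
      have "polyop (map_poly of_int A :: complex poly) eC j = polyop bC (polyop Q eC) j"
        by (simp add: AC polyop_mult)
      also have "polyop Q eC = (\<lambda>j. of_real (g j))" using e1 by (simp add: fun_eq_iff)
      also have "polyop bC (\<lambda>j. of_real (g j)) j = of_real (polyop bR g j)"
        using polyop_of_real[of bR g j] bR by simp
      finally have X: "polyop (map_poly of_int A :: complex poly) eC j = of_real (polyop bR g j)" .
      have "(\<Sum>i=0..d. of_int (a i) * e (j+i)) = Re (polyop (map_poly of_int A :: complex poly) eC j)"
        by (simp add: polyop_def degAC coeff_map_poly a_def e_def atLeast0AtMost Re_sum)
      then show ?thesis using X by simp
    qed
    define zi where "zi = (\<lambda>j. \<lfloor>\<Sum>i=0..d. of_int (a i) * (x (j+i) + e (j+i))\<rfloor>)"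
    have zint: "(\<Sum>i=0..d. of_int (a i) * (x (j+i) + e (j+i))) = of_int (zi j)" if "j \<in> {1..n}" for j
    proof -
      have "(\<Sum>i=0..d. of_int (a i) * (x (j+i) + e (j+i))) = polyop bR g j - r j"
        by (simp add: r_def erow[symmetric] distrib_left sum.distrib)
      also have "\<dots> \<in> \<int>" using g2 that by auto
      finally show ?thesis unfolding zi_def by (metis floor_of_int Ints_cases)
    qed
    obtain w where w: "\<forall>j\<in>{1..n}. Tz a d w j = zi j"
      using Tz_surj[of a d n zi] ad0 prim by (auto simp: ad_def a_def)
    define v where "v = (\<lambda>j. x j + e j - of_int (w j))"
    have Rv: "Rec a d m v"
      unfolding Rec_def
    proof
      fix j assume j: "j \<in> {1..m-d}"
      have "(\<Sum>i=0..d. of_int (a i) * v (j+i)) =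
            (\<Sum>i=0..d. of_int (a i) * (x (j+i) + e (j+i))) - of_int (Tz a d w j)"
        by (simp add: v_def Tz_def algebra_simps sum_subtractf)
      also have "\<dots> = 0" using zint[of j] w j by (simp add: n_def)
      finally show "(\<Sum>i=0..d. of_int (a i) * v (j+i)) = 0" .
    qed
    have R\<theta>: "Rec a d m \<theta>" using rec\<theta> by (simp add: Rec_def a_def)
    define \<eta> where "\<eta> = eps'/2 - 1/(2*B)"
    have "1 / B \<le> \<epsilon>" using epsb by (simp add: B_def ad_def)
    then have \<eta>: "\<eta> > 0" using eps' by (simp add: \<eta>_def)
    obtain t h where th: "\<forall>j\<in>{1..m}. \<bar>t * \<theta> j - v j - of_int (h j)\<bar> < \<eta>"
      using kron_apply[of a d m \<theta> v \<eta>] ad0 d0 dm R\<theta> Rv indep \<eta> by (auto simp: ad_def a_def)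
    define c where "c = (\<lambda>j. x j - t * \<theta> j - of_int (w j - h j))"
    show "\<exists>s\<in>S_theta \<theta>. \<exists>c\<in>cube m eps'. torus_eq m x (\<lambda>j. s j + c j)"
    proof (intro bexI)
      show "(\<lambda>j. t * \<theta> j) \<in> S_theta \<theta>" by (auto simp: S_theta_def)
      show "c \<in> cube m eps'"
        unfolding cube_def
      proof safe
        fix j assume j: "j \<in> {1..m}"
        have "c j = - (t * \<theta> j - v j - of_int (h j)) - e j" by (simp add: c_def v_def)
        then have "\<bar>c j\<bar> \<le> \<bar>t * \<theta> j - v j - of_int (h j)\<bar> + \<bar>e j\<bar>" by simp
        also have "\<dots> \<le> \<eta> + 1/(2*B)" using th j ebound[of j] by fastforce
        finally show "\<bar>c j\<bar> \<le> eps' / 2" by (simp add: \<eta>_def)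
      qed
      show "torus_eq m x (\<lambda>j. t * \<theta> j + c j)"
        unfolding torus_eq_def by (auto simp: c_def)
    qed
  qed
qed

end
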